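(* Let $n\geq 4$, let $\mathfrak g=sl_n(\mathbb R)$ and let $G$ be the connected, simply connected Lie group with Lie algebra $\mathfrak g$ (the two-sheeted covering of $SL_n(\mathbb R)$), acting on $\mathfrak g$ by the adjoint action. Let $B\subset G$ be the inverse image in $G$ of the subgroup of upper triangular matrices of $SL_n(\mathbb R)$. Let $k$ be an integer with $2\leq k\leq n/2$ and $\varepsilon\in\{1,-1\}$, put $$X_{k,\varepsilon}=\sum_{i=1}^{k-1}E_{n+1-i,\,i}+\varepsilon\,E_{n+1-k,\,k}\in\mathfrak g,$$ where $E_{a,b}$ denotes the elementary matrix with a $1$ in position $(a,b)$, and let $O_{k,\varepsilon}=G\cdot X_{k,\varepsilon}$ be its adjoint orbit. Then the $B$-orbit $B\cdot X_{k,\varepsilon}$ is the unique dense $B$-orbit contained in $O_{k,\varepsilon}$.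
   Context: In the paper's notation, with the usual root system $\varepsilon_i-\varepsilon_j$ of $sl_n$, simple roots $\alpha_k=\varepsilon_k-\varepsilon_{k+1}$, root vectors $X_{\varepsilon_i-\varepsilon_j}=E_{i,j}$, $\beta_{i,j}=\alpha_i+\dots+\alpha_j$ and $\beta_i=\beta_{i,n-i}$, one has $X_{-\beta_i}=E_{n+1-i,i}$, so $X_{k,\varepsilon}=\sum_{i=1}^{k-1}X_{-\beta_i}+\varepsilon X_{-\beta_k}$. The orbits $O_{k,\varepsilon}$ ($2\le k\le n/2$) are the non-minimal spherical nilpotent orbits of $sl_n(\mathbb R)$. *)

theory Defs
  imports "HOL-Analysis.Analysis" "Jordan_Normal_Form.Determinant"
begin

text \<open>Real n x n matrices are Jordan_Normal_Form matrices of dimension n x n;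
  indices are 0-based internally, the elementary matrix below takes 1-based
  indices as in the paper.\<close>

definition sl :: "nat \<Rightarrow> real mat set" where
  "sl n = {A \<in> carrier_mat n n. (\<Sum>i<n. A $$ (i,i)) = 0}"

definition SL :: "nat \<Rightarrow> real mat set" where
  "SL n = {g \<in> carrier_mat n n. det g = 1}"

text \<open>Image in SL_n(R) of the Borel subgroup B: upper triangular matrices of SL_n(R).\<close>
definition Borel :: "nat \<Rightarrow> real mat set" where
  "Borel n = {g \<in> SL n. upper_triangular g}"

definition mat_inv :: "real mat \<Rightarrow> real mat" where
  "mat_inv g = (SOME h. inverts_mat g h \<and> inverts_mat h g)"

definition Ad :: "real mat \<Rightarrow> real mat \<Rightarrow> real mat" where
  "Ad g X = g * X * mat_inv g"

definition orbit :: "real mat set \<Rightarrow> real mat \<Rightarrow> real mat set" where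
  "orbit H X = (\<lambda>g. Ad g X) ` H"

definition Emat :: "nat \<Rightarrow> nat \<Rightarrow> nat \<Rightarrow> real mat" where
  "Emat n a b = mat n n (\<lambda>(i,j). if i + 1 = a \<and> j + 1 = b then 1 else 0)"

definition Xke :: "nat \<Rightarrow> nat \<Rightarrow> real \<Rightarrow> real mat" where
  "Xke n k eps = foldr (+) (map (\<lambda>i. Emat n (n + 1 - i) i) [1..<k]) (eps \<cdot>\<^sub>m Emat n (n + 1 - k) k)"

text \<open>Embedding of n x n matrices into the product space (nat x nat => real),
  which carries the product topology; on n x n matrices this is the
  Euclidean topology of the Lie algebra.\<close>
definition mat_coords :: "real mat \<Rightarrow> (nat \<times> nat \<Rightarrow> real)" where
  "mat_coords A = (\<lambda>(i,j). if i < dim_row A \<and> j < dim_col A then A $$ (i,j) else 0)"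

definition mat_dense_in :: "real mat set \<Rightarrow> real mat set \<Rightarrow> bool" where
  "mat_dense_in S T \<longleftrightarrow> mat_coords ` T \<subseteq> closure (mat_coords ` S)"

end

theory Submission
  imports Defs
begin


lemma mult_entry:
  assumes "A \<in> carrier_mat nr m" "B \<in> carrier_mat m nc" "i < nr" "j < nc"
  shows "(A * B) $$ (i,j) = (\<Sum>l<m. A $$ (i,l) * B $$ (l,j))"
  using assms by (auto simp: scalar_prod_def lessThan_atLeast0 intro!: sum.cong)

lemma mat_inv_eq:
  assumes g: "g \<in> carrier_mat n n" and h: "h \<in> carrier_mat n n"
    and gh: "g * h = 1\<^sub>m n" and hg: "h * g = 1\<^sub>m n"
  shows "mat_inv g = h"
proof -
  have ex: "inverts_mat g h \<and> inverts_mat h g" using g h gh hg by (simp add: inverts_mat_def)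
  define h' where "h' = mat_inv g"
  have *: "inverts_mat g h' \<and> inverts_mat h' g" unfolding mat_inv_def h'_def by (rule someI, rule ex)
  hence gh': "g * h' = 1\<^sub>m n" and hg': "h' * g = 1\<^sub>m (dim_row h')" using g by (auto simp: inverts_mat_def)
  have dc: "dim_col h' = n" using gh' by (metis index_mult_mat(3) index_one_mat(3))
  have dr: "dim_row h' = n" using hg' g by (metis carrier_matD(2) index_mult_mat(3) index_one_mat(3))
  have h'c: "h' \<in> carrier_mat n n" using dc dr by auto
  have "h' = h' * (g * h)" using gh h'c by simp
  also have "\<dots> = (h' * g) * h" using h'c g h by simp
  also have "\<dots> = h" using hg' dr h by simp
  finally show ?thesis unfolding h'_def .
qed

lemma mat_inv_det:
  assumes g: "g \<in> carrier_mat n n" and d: "det g \<noteq> 0"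
  shows "mat_inv g = (1 / det g) \<cdot>\<^sub>m adj_mat g"
proof (rule mat_inv_eq[OF g])
  show "(1 / det g) \<cdot>\<^sub>m adj_mat g \<in> carrier_mat n n" using adj_mat(1)[OF g] by simp
  show "g * ((1 / det g) \<cdot>\<^sub>m adj_mat g) = 1\<^sub>m n"
    using adj_mat[OF g] d g by (subst mult_smult_distrib[of _ n n _ n]) auto
  show "(1 / det g) \<cdot>\<^sub>m adj_mat g * g = 1\<^sub>m n"
    using adj_mat[OF g] d g by (subst mult_smult_assoc_mat[of _ n n _ n]) auto
qed

lemma mat_inv_props:
  assumes g: "g \<in> carrier_mat n n" and d: "det g \<noteq> 0"
  shows "mat_inv g \<in> carrier_mat n n" "g * mat_inv g = 1\<^sub>m n" "mat_inv g * g = 1\<^sub>m n"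
    "det (mat_inv g) = 1 / det g"
proof -
  have e: "mat_inv g = (1 / det g) \<cdot>\<^sub>m adj_mat g" by (rule mat_inv_det[OF g d])
  show c: "mat_inv g \<in> carrier_mat n n" using e adj_mat(1)[OF g] by simp
  show gh: "g * mat_inv g = 1\<^sub>m n" unfolding e
    using adj_mat[OF g] d g by (subst mult_smult_distrib[of _ n n _ n]) auto
  show "mat_inv g * g = 1\<^sub>m n" unfolding e
    using adj_mat[OF g] d g by (subst mult_smult_assoc_mat[of _ n n _ n]) auto
  have "det g * det (mat_inv g) = 1" using det_mult[OF g c] gh by simp
  thus "det (mat_inv g) = 1 / det g" using d by (simp add: field_simps)
qed

lemma det_upper:
  fixes A :: "real mat"
  assumes "upper_triangular A" "A \<in> carrier_mat n n"
  shows "det A = (\<Prod>i<n. A $$ (i,i))"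
proof -
  have "prod_list (map f [0..<m]) = (\<Prod>i<m. f i)" for f :: "nat \<Rightarrow> real" and m
    by (induct m) auto
  thus ?thesis using det_upper_triangular[OF assms] assms(2) by (simp add: diag_mat_def)
qed

lemma upper_mult:
  assumes "A \<in> carrier_mat n n" "B \<in> carrier_mat n n" "upper_triangular A" "upper_triangular B"
  shows "upper_triangular (A * B)"
proof -
  { fix i j assume ij: "j < i" "i < n"
    have "(A * B) $$ (i,j) = (\<Sum>l<n. A $$ (i,l) * B $$ (l,j))" by (rule mult_entry[of A n n B n]) (use assms ij in auto)
    also have "\<dots> = 0"
    proof (rule sum.neutral, clarify)
      fix l assume "l < n"
      show "A $$ (i,l) * B $$ (l,j) = 0"
      proof (cases "l < i")
        case True thus ?thesis using upper_triangularD[of A l i] assms(1,3) ij by auto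
      next
        case False thus ?thesis using upper_triangularD[of B j l] assms(2,4) ij \<open>l < n\<close> by auto
      qed
    qed
    finally have "(A * B) $$ (i,j) = 0" . }
  thus ?thesis using assms by (auto simp: upper_triangular_def)
qed

lemma upper_inv:
  fixes b h :: "real mat"
  assumes b: "b \<in> carrier_mat n n" and ub: "upper_triangular b" and h: "h \<in> carrier_mat n n"
    and hb: "h * b = 1\<^sub>m n" and d: "det b \<noteq> 0"
  shows "upper_triangular h"
proof -
  have diag: "b $$ (j,j) \<noteq> 0" if "j < n" for j
    using d det_upper[OF ub b] that by (metis finite_lessThan lessThan_iff prod_zero_iff)
  have "\<forall>i. j < i \<longrightarrow> i < n \<longrightarrow> h $$ (i,j) = 0" for j
  proof (induct j rule: less_induct)
    case (less j)
    show ?case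
    proof (intro allI impI)
      fix i assume ij: "j < i" "i < n"
      have "0 = (h * b) $$ (i,j)" using hb ij by simp
      also have "\<dots> = (\<Sum>l<n. h $$ (i,l) * b $$ (l,j))" by (rule mult_entry[of h n n b n]) (use h b ij in auto)
      also have "\<dots> = (\<Sum>l<n. if l = j then h $$ (i,j) * b $$ (j,j) else 0)"
      proof (rule sum.cong[OF refl])
        fix l assume l: "l \<in> {..<n}"
        show "h $$ (i,l) * b $$ (l,j) = (if l = j then h $$ (i,j) * b $$ (j,j) else 0)"
        proof (cases "l < j")
          case True thus ?thesis using less[OF True] ij by auto
        next
          case False thus ?thesis using upper_triangularD[of b j l] ub b l by (cases "l = j") auto
        qed
      qed
      also have "\<dots> = h $$ (i,j) * b $$ (j,j)" using ij by simp
      finally show "h $$ (i,j) = 0" using diag ij by simp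
    qed
  qed
  thus ?thesis using h by (auto simp: upper_triangular_def)
qed

lemma Borel_mult: assumes "b1 \<in> Borel n" "b2 \<in> Borel n" shows "b1 * b2 \<in> Borel n"
proof -
  have b: "b1 \<in> carrier_mat n n" "b2 \<in> carrier_mat n n" "det b1 = 1" "det b2 = 1"
    "upper_triangular b1" "upper_triangular b2" using assms by (auto simp: Borel_def SL_def)
  have "det (b1 * b2) = 1" using det_mult[OF b(1,2)] b(3,4) by simp
  moreover have "upper_triangular (b1 * b2)" using upper_mult[OF b(1,2,5,6)] .
  moreover have "b1 * b2 \<in> carrier_mat n n" using b by simp
  ultimately show ?thesis by (simp add: Borel_def SL_def)
qed

lemma Borel_inv: assumes "b \<in> Borel n" shows "mat_inv b \<in> Borel n"
proof -
  have b: "b \<in> carrier_mat n n" "det b = 1" "upper_triangular b" using assms by (auto simp: Borel_def SL_def)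
  note p = mat_inv_props[OF b(1)] 
  show ?thesis using p b upper_inv[OF b(1) b(3) _ _] by (auto simp: Borel_def SL_def)
qed

lemma SL_mult: "g1 \<in> SL n \<Longrightarrow> g2 \<in> SL n \<Longrightarrow> g1 * g2 \<in> SL n"
  unfolding SL_def using det_mult[of g1 n g2] by auto

lemma Ad_comp:
  assumes g: "g \<in> carrier_mat n n" "det g \<noteq> 0" and h: "h \<in> carrier_mat n n" "det h \<noteq> 0"
    and Y: "Y \<in> carrier_mat n n"
  shows "Ad g (Ad h Y) = Ad (g * h) Y"
proof -
  note pg = mat_inv_props[OF g] and ph = mat_inv_props[OF h]
  have "mat_inv (g * h) = mat_inv h * mat_inv g"
  proof (rule mat_inv_eq)
    show "g * h \<in> carrier_mat n n" using g h by simp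
    show "mat_inv h * mat_inv g \<in> carrier_mat n n" using pg ph by simp
    have e1: "g * h * (mat_inv h * mat_inv g) = g * (h * (mat_inv h * mat_inv g))"
      using g h pg ph by (meson assoc_mult_mat mult_carrier_mat)
    have e2: "h * (mat_inv h * mat_inv g) = (h * mat_inv h) * mat_inv g"
      using assoc_mult_mat[of h n n "mat_inv h" n "mat_inv g" n] g h pg ph by simp
    show "g * h * (mat_inv h * mat_inv g) = 1\<^sub>m n" unfolding e1 e2 using ph pg g by simp
    have e3: "mat_inv h * mat_inv g * (g * h) = mat_inv h * (mat_inv g * (g * h))"
      using g h pg ph by (meson assoc_mult_mat mult_carrier_mat)
    have e4: "mat_inv g * (g * h) = (mat_inv g * g) * h"
      using assoc_mult_mat[of "mat_inv g" n n g n h n] g h pg ph by simp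
    show "mat_inv h * mat_inv g * (g * h) = 1\<^sub>m n" unfolding e3 e4 using ph pg h by simp
  qed
  thus ?thesis unfolding Ad_def using g h Y pg ph by (simp add: assoc_mult_mat[of _ n n _ n _ n])
qed

lemma Ad_inv:
  assumes g: "g \<in> carrier_mat n n" "det g \<noteq> 0" and Y: "Y \<in> carrier_mat n n"
  shows "Ad (mat_inv g) (Ad g Y) = Y"
proof -
  note pg = mat_inv_props[OF g]
  have d: "det (mat_inv g) \<noteq> 0" using pg g by simp
  have "Ad (mat_inv g) (Ad g Y) = Ad (mat_inv g * g) Y" by (rule Ad_comp[OF pg(1) d g Y])
  also have "\<dots> = Y" unfolding Ad_def pg(3) using mat_inv_eq[of "1\<^sub>m n" n "1\<^sub>m n"] Y by simp
  finally show ?thesis .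
qed

lemma Ad_carrier: "g \<in> carrier_mat n n \<Longrightarrow> det g \<noteq> 0 \<Longrightarrow> Y \<in> carrier_mat n n \<Longrightarrow> Ad g Y \<in> carrier_mat n n"
  unfolding Ad_def using mat_inv_props by (metis mult_carrier_mat)

lemma Borel_SL: "Borel n \<subseteq> SL n" unfolding Borel_def by auto

lemma orbit_Borel_eq:
  assumes Y: "Y \<in> carrier_mat n n" and X: "X \<in> carrier_mat n n"
    and b1: "b1 \<in> Borel n" and b2: "b2 \<in> Borel n" and e: "Ad b1 Y = Ad b2 X"
  shows "orbit (Borel n) Y = orbit (Borel n) X"
proof -
  have B: "b \<in> carrier_mat n n \<and> det b \<noteq> 0" if "b \<in> Borel n" for b using that by (auto simp: Borel_def SL_def)
  have Yx: "Y = Ad (mat_inv b1 * b2) X"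
  proof -
    have "Y = Ad (mat_inv b1) (Ad b1 Y)" using Ad_inv[of b1 n Y] B[OF b1] Y by simp
    also have "\<dots> = Ad (mat_inv b1) (Ad b2 X)" using e by simp
    also have "\<dots> = Ad (mat_inv b1 * b2) X" using Ad_comp B[OF Borel_inv[OF b1]] B[OF b2] X by blast
    finally show ?thesis .
  qed
  let ?c = "mat_inv b1 * b2"
  have c: "?c \<in> Borel n" using Borel_mult Borel_inv b1 b2 by blast
  have ci: "mat_inv ?c \<in> Borel n" using Borel_inv[OF c] .
  have "X = Ad (mat_inv ?c) Y" using Yx Ad_inv[of ?c n X] B[OF c] X by simp
  show ?thesis
  proof
    show "orbit (Borel n) Y \<subseteq> orbit (Borel n) X"
    proof
      fix Z assume "Z \<in> orbit (Borel n) Y"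
      then obtain b where b: "b \<in> Borel n" "Z = Ad b Y" by (auto simp: orbit_def)
      have "Z = Ad (b * ?c) X" using b Yx Ad_comp[of b n ?c X] B[OF b(1)] B[OF c] X by simp
      thus "Z \<in> orbit (Borel n) X" using Borel_mult[OF b(1) c] by (auto simp: orbit_def)
    qed
    show "orbit (Borel n) X \<subseteq> orbit (Borel n) Y"
    proof
      fix Z assume "Z \<in> orbit (Borel n) X"
      then obtain b where b: "b \<in> Borel n" "Z = Ad b X" by (auto simp: orbit_def)
      have "Z = Ad (b * mat_inv ?c) Y" using b \<open>X = Ad (mat_inv ?c) Y\<close> Ad_comp[of b n "mat_inv ?c" Y] B[OF b(1)] B[OF ci] Y by simp
      thus "Z \<in> orbit (Borel n) Y" using Borel_mult[OF b(1) ci] by (auto simp: orbit_def)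
    qed
  qed
qed



definition cc :: "nat \<Rightarrow> real \<Rightarrow> nat \<Rightarrow> real" where
  "cc k eps i = (if i = k - 1 then eps else 1)"

lemma foldr_mat:
  fixes f :: "nat \<Rightarrow> real mat"
  assumes "\<And>i. f i \<in> carrier_mat n n" "Z \<in> carrier_mat n n"
  shows "foldr (+) (map f [1..<m]) Z \<in> carrier_mat n n \<and>
    (\<forall>a<n. \<forall>b<n. foldr (+) (map f [1..<m]) Z $$ (a,b) = (\<Sum>i\<in>{1..<m}. f i $$ (a,b)) + Z $$ (a,b))"
  using assms(2)
proof (induct m arbitrary: Z)
  case 0 thus ?case by simp
next
  case (Suc m)
  show ?case
  proof (cases "m = 0")
    case True thus ?thesis using Suc by simp
  next
    case False
    hence u: "[1..<Suc m] = [1..<m] @ [m]" by simp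
    have fz: "f m + Z \<in> carrier_mat n n" using assms(1) Suc(2) by simp
    note IH = Suc(1)[OF fz]
    have "{1..<Suc m} = insert m {1..<m}" using False by auto
    thus ?thesis unfolding u using IH assms(1)[of m] Suc(2) by (auto simp: algebra_simps)
  qed
qed

lemma sum_if_less:
  fixes f :: "nat \<Rightarrow> real"
  assumes "k \<le> n" shows "(\<Sum>p<n. if p < k then f p else 0) = (\<Sum>p<k. f p)"
proof -
  have "(\<Sum>p<n. if p < k then f p else 0) = (\<Sum>p\<in>{..<k}. if p < k then f p else 0)"
    by (rule sum.mono_neutral_right) (use assms in auto)
  thus ?thesis by simp
qed

lemma X_entry:
  assumes k1: "1 \<le> k" and kn: "k \<le> n"
  shows "Xke n k eps \<in> carrier_mat n n"
    "\<And>a b. a < n \<Longrightarrow> b < n \<Longrightarrow> Xke n k eps $$ (a,b) = (if b < k \<and> a = n - 1 - b then cc k eps b else 0)"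
proof -
  let ?f = "\<lambda>i. Emat n (n + 1 - i) i"
  let ?Z = "eps \<cdot>\<^sub>m Emat n (n + 1 - k) k"
  have f: "\<And>i. ?f i \<in> carrier_mat n n" "?Z \<in> carrier_mat n n" by (auto simp: Emat_def)
  note F = foldr_mat[OF f, where m=k]
  show "Xke n k eps \<in> carrier_mat n n" using F unfolding Xke_def by simp
  fix a b assume ab: "a < n" "b < n"
  have "Xke n k eps $$ (a,b) = (\<Sum>i\<in>{1..<k}. ?f i $$ (a,b)) + ?Z $$ (a,b)"
    using F ab unfolding Xke_def by simp
  also have "(\<Sum>i\<in>{1..<k}. ?f i $$ (a,b)) = (\<Sum>i\<in>{1..<k}. if i = b + 1 then (if a = n - 1 - b then 1 else 0) else 0)"
    by (rule sum.cong[OF refl]) (use ab kn in \<open>auto simp: Emat_def\<close>)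
  also have "\<dots> = (if b + 1 < k \<and> a = n - 1 - b then 1 else 0)"
    by (subst sum.delta) auto
  also have "?Z $$ (a,b) = (if b = k - 1 \<and> a = n - 1 - b then eps else 0)"
    using ab kn k1 by (auto simp: Emat_def)
  finally show "Xke n k eps $$ (a,b) = (if b < k \<and> a = n - 1 - b then cc k eps b else 0)"
    using k1 by (auto simp: cc_def)
qed

lemma adj_sum:
  fixes M :: "real mat"
  assumes M: "M \<in> carrier_mat m m" and rs: "r < m" "s < m"
  shows "(\<Sum>l<m. M $$ (r,l) * adj_mat M $$ (l,s)) = (if r = s then det M else 0)"
    "(\<Sum>l<m. adj_mat M $$ (r,l) * M $$ (l,s)) = (if r = s then det M else 0)"
proof -
  note A = adj_mat[OF M]
  have "(M * adj_mat M) $$ (r,s) = (\<Sum>l<m. M $$ (r,l) * adj_mat M $$ (l,s))"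
    by (rule mult_entry[OF M A(1) rs])
  thus "(\<Sum>l<m. M $$ (r,l) * adj_mat M $$ (l,s)) = (if r = s then det M else 0)"
    using A(2) rs by (simp split: if_splits)
  have "(adj_mat M * M) $$ (r,s) = (\<Sum>l<m. adj_mat M $$ (r,l) * M $$ (l,s))"
    by (rule mult_entry[OF A(1) M rs])
  thus "(\<Sum>l<m. adj_mat M $$ (r,l) * M $$ (l,s)) = (if r = s then det M else 0)"
    using A(3) rs by (simp split: if_splits)
qed

lemma solve_sys:
  fixes M :: "real mat"
  assumes M: "M \<in> carrier_mat m m" and d: "det M \<noteq> 0"
  shows "\<exists>x. \<forall>r<m. (\<Sum>l<m. M $$ (r,l) * x l) = y r"
proof -
  define x where "x l = (1 / det M) * (\<Sum>s<m. adj_mat M $$ (l,s) * y s)" for l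
  have "(\<Sum>l<m. M $$ (r,l) * x l) = y r" if r: "r < m" for r
  proof -
    have "(\<Sum>l<m. M $$ (r,l) * x l) = (1 / det M) * (\<Sum>l<m. \<Sum>s<m. M $$ (r,l) * adj_mat M $$ (l,s) * y s)"
      unfolding x_def by (simp add: sum_distrib_left sum_distrib_right mult.assoc mult.left_commute)
    also have "(\<Sum>l<m. \<Sum>s<m. M $$ (r,l) * adj_mat M $$ (l,s) * y s) = (\<Sum>s<m. (\<Sum>l<m. M $$ (r,l) * adj_mat M $$ (l,s)) * y s)"
      by (subst sum.swap) (simp add: sum_distrib_right)
    also have "\<dots> = (\<Sum>s<m. (if r = s then det M else 0) * y s)"
      by (rule sum.cong[OF refl]) (use adj_sum(1)[OF M r] in auto)
    also have "\<dots> = (\<Sum>s<m. if s = r then det M * y s else 0)" by (rule sum.cong) auto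
    also have "\<dots> = det M * y r" using r by simp
    finally show ?thesis using d by simp
  qed
  thus ?thesis by blast
qed

lemma kernel_triv:
  fixes M :: "real mat"
  assumes M: "M \<in> carrier_mat m m" and d: "det M \<noteq> 0"
    and x: "\<And>r. r < m \<Longrightarrow> (\<Sum>l<m. M $$ (r,l) * x l) = 0" and l: "l < m"
  shows "x l = 0"
proof -
  have "0 = (\<Sum>r<m. adj_mat M $$ (l,r) * (\<Sum>s<m. M $$ (r,s) * x s))" using x by simp
  also have "\<dots> = (\<Sum>r<m. \<Sum>s<m. adj_mat M $$ (l,r) * M $$ (r,s) * x s)"
    by (simp add: sum_distrib_left mult.assoc)
  also have "\<dots> = (\<Sum>s<m. (\<Sum>r<m. adj_mat M $$ (l,r) * M $$ (r,s)) * x s)"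
    by (subst sum.swap) (simp add: sum_distrib_right)
  also have "\<dots> = (\<Sum>s<m. (if l = s then det M else 0) * x s)"
    by (rule sum.cong[OF refl]) (use adj_sum(2)[OF M l] in auto)
  also have "\<dots> = (\<Sum>s<m. if s = l then det M * x s else 0)" by (rule sum.cong) auto
  also have "\<dots> = det M * x l" using l by simp
  finally show ?thesis using d by simp
qed

locale Xsetup =
  fixes n k :: nat and eps :: real
  assumes k2: "2 \<le> k" and kn: "2 * k \<le> n" and eps: "eps \<in> {1, -1}"
begin

lemma Xc: "Xke n k eps \<in> carrier_mat n n"
  using X_entry(1)[of k n eps] k2 kn by simp

lemma Xe: "a < n \<Longrightarrow> b < n \<Longrightarrow> Xke n k eps $$ (a,b) = (if b < k \<and> a = n - 1 - b then cc k eps b else 0)"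
  using X_entry(2)[of k n a b eps] k2 kn by simp

lemma cnz: "cc k eps i \<noteq> 0"
  using eps by (auto simp: cc_def)

lemma XX0: "Xke n k eps * Xke n k eps = 0\<^sub>m n n"
proof (rule eq_matI)
  fix a b assume ab: "a < dim_row (0\<^sub>m n n :: real mat)" "b < dim_col (0\<^sub>m n n :: real mat)"
  hence ab: "a < n" "b < n" by auto
  have "(Xke n k eps * Xke n k eps) $$ (a,b) = (\<Sum>l<n. Xke n k eps $$ (a,l) * Xke n k eps $$ (l,b))"
    by (rule mult_entry[OF Xc Xc ab])
  also have "\<dots> = 0"
  proof (rule sum.neutral, clarify)
    fix l assume l: "l < n"
    show "Xke n k eps $$ (a,l) * Xke n k eps $$ (l,b) = 0"
      using Xe[OF ab(1) l] Xe[OF l ab(2)] kn by auto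
  qed
  finally show "(Xke n k eps * Xke n k eps) $$ (a,b) = 0\<^sub>m n n $$ (a,b)" using ab by simp
qed (use Xc in auto)

lemma Xsl: "Xke n k eps \<in> sl n"
proof -
  have "(\<Sum>i<n. Xke n k eps $$ (i,i)) = 0"
    by (rule sum.neutral) (use Xe kn in auto)
  thus ?thesis using Xc by (simp add: sl_def)
qed

lemma gX_entry:
  assumes g: "g \<in> carrier_mat n n" and a: "a < n" and p: "p < n"
  shows "(g * Xke n k eps) $$ (a,p) = (if p < k then g $$ (a, n - 1 - p) * cc k eps p else 0)"
proof -
  have "(g * Xke n k eps) $$ (a,p) = (\<Sum>q<n. g $$ (a,q) * Xke n k eps $$ (q,p))"
    by (rule mult_entry[OF g Xc a p])
  also have "\<dots> = (\<Sum>q<n. if q = n - 1 - p then (if p < k then g $$ (a, q) * cc k eps p else 0) else 0)"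
    by (rule sum.cong[OF refl]) (use Xe p in auto)
  also have "\<dots> = (if p < k then g $$ (a, n - 1 - p) * cc k eps p else 0)"
    using p by (subst sum.delta) auto
  finally show ?thesis .
qed

lemma conj_entry:
  assumes g: "g \<in> carrier_mat n n" and h: "h \<in> carrier_mat n n" and a: "a < n" and b: "b < n"
  shows "(g * Xke n k eps * h) $$ (a,b) = (\<Sum>i<k. g $$ (a, n - 1 - i) * cc k eps i * h $$ (i,b))"
proof -
  have gX: "g * Xke n k eps \<in> carrier_mat n n" using g Xc by simp
  have "(g * Xke n k eps * h) $$ (a,b) = (\<Sum>p<n. (g * Xke n k eps) $$ (a,p) * h $$ (p,b))"
    by (rule mult_entry[OF gX h a b])
  also have "\<dots> = (\<Sum>p<n. if p < k then g $$ (a, n - 1 - p) * cc k eps p * h $$ (p,b) else 0)"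
    by (rule sum.cong[OF refl]) (use gX_entry[OF g a] in auto)
  also have "\<dots> = (\<Sum>i<k. g $$ (a, n - 1 - i) * cc k eps i * h $$ (i,b))"
    by (rule sum_if_less) (use kn in auto)
  finally show ?thesis .
qed

end



definition Dl :: "nat \<Rightarrow> nat \<Rightarrow> real mat \<Rightarrow> real mat" where
  "Dl n j Y = mat j j (\<lambda>(r,c). Y $$ (n - j + r, c))"

lemma Dl_carrier[simp]: "Dl n j Y \<in> carrier_mat j j" by (simp add: Dl_def)

lemma sum_split_pt2:
  fixes f x :: "nat \<Rightarrow> real"
  assumes "j < m" "k \<le> j"
  shows "(\<Sum>l<m. f l * (if l < k then x l else if l = j then 1 else 0)) = (\<Sum>l<k. f l * x l) + f j"
proof -
  have "(\<Sum>l<m. f l * (if l < k then x l else if l = j then 1 else 0))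
      = (\<Sum>l<m. (if l < k then f l * x l else 0) + (if l = j then f j else 0))"
    by (rule sum.cong) (use assms in auto)
  also have "\<dots> = (\<Sum>l<m. if l < k then f l * x l else 0) + (\<Sum>l<m. if l = j then f j else 0)"
    by (rule sum.distrib)
  also have "(\<Sum>l<m. if l < k then f l * x l else 0) = (\<Sum>l<k. f l * x l)"
    by (rule sum_if_less) (use assms in auto)
  also have "(\<Sum>l<m. if l = j then f j else 0) = f j" using assms by simp
  finally show ?thesis .
qed

lemma sum_split_pt:
  fixes f x :: "nat \<Rightarrow> real"
  assumes "j < m"
  shows "(\<Sum>l<m. f l * (if l < j then x l else if l = j then 1 else 0)) = (\<Sum>l<j. f l * x l) + f j"
proof -
  have "(\<Sum>l<m. f l * (if l < j then x l else if l = j then 1 else 0))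
      = (\<Sum>l<m. (if l < j then f l * x l else 0) + (if l = j then f j else 0))"
    by (rule sum.cong) auto
  also have "\<dots> = (\<Sum>l<m. if l < j then f l * x l else 0) + (\<Sum>l<m. if l = j then f j else 0)"
    by (rule sum.distrib)
  also have "(\<Sum>l<m. if l < j then f l * x l else 0) = (\<Sum>l<j. f l * x l)"
    by (rule sum_if_less) (use assms in auto)
  also have "(\<Sum>l<m. if l = j then f j else 0) = f j" using assms by simp
  finally show ?thesis .
qed

lemma beta_ex:
  assumes Yc: "Y \<in> carrier_mat n n" and j: "j < n"
    and D: "det (Dl n j Y) \<noteq> 0" "det (Dl n (Suc j) Y) \<noteq> 0"
  shows "\<exists>\<beta>. \<beta> j = 1 \<and> (\<forall>r. j < r \<longrightarrow> \<beta> r = 0)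
    \<and> (\<forall>r. n - 1 - j < r \<longrightarrow> r < n \<longrightarrow> (\<Sum>l<n. Y $$ (r,l) * \<beta> l) = 0)
    \<and> (\<Sum>l<n. Y $$ (n - 1 - j, l) * \<beta> l) \<noteq> 0"
proof -
  obtain x where x: "\<And>r. r < j \<Longrightarrow> (\<Sum>l<j. Dl n j Y $$ (r,l) * x l) = - Y $$ (n - j + r, j)"
    using solve_sys[OF Dl_carrier D(1), of "\<lambda>r. - Y $$ (n - j + r, j)"] by blast
  define \<beta> where "\<beta> l = (if l < j then x l else if l = j then 1 else 0)" for l
  have sb: "(\<Sum>l<m. f l * \<beta> l) = (\<Sum>l<j. f l * x l) + f j" if "j < m" for f m
    unfolding \<beta>_def by (rule sum_split_pt[OF that])
  have rows: "(\<Sum>l<n. Y $$ (r,l) * \<beta> l) = 0" if r: "n - 1 - j < r" "r < n" for r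
  proof -
    define r' where "r' = r - (n - j)"
    have r': "r' < j" "r = n - j + r'" using r j unfolding r'_def by auto
    have "(\<Sum>l<n. Y $$ (r,l) * \<beta> l) = (\<Sum>l<j. Y $$ (r,l) * x l) + Y $$ (r,j)" by (rule sb[OF j])
    also have "(\<Sum>l<j. Y $$ (r,l) * x l) = (\<Sum>l<j. Dl n j Y $$ (r',l) * x l)"
      by (rule sum.cong[OF refl]) (use r' in \<open>auto simp: Dl_def\<close>)
    also have "\<dots> = - Y $$ (r,j)" using x[OF r'(1)] r'(2) by simp
    finally show ?thesis by simp
  qed
  have nz: "(\<Sum>l<n. Y $$ (n - 1 - j, l) * \<beta> l) \<noteq> 0"
  proof
    assume z: "(\<Sum>l<n. Y $$ (n - 1 - j, l) * \<beta> l) = 0"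
    have "\<beta> j = 0"
    proof (rule kernel_triv[OF Dl_carrier D(2)])
      fix r' assume r': "r' < Suc j"
      have "(\<Sum>l<Suc j. Dl n (Suc j) Y $$ (r',l) * \<beta> l) = (\<Sum>l<Suc j. Y $$ (n - 1 - j + r', l) * \<beta> l)"
        by (rule sum.cong[OF refl]) (use r' j in \<open>auto simp: Dl_def\<close>)
      also have "\<dots> = (\<Sum>l<n. Y $$ (n - 1 - j + r', l) * \<beta> l)" using sb[of "Suc j"] sb[OF j] by simp
      also have "\<dots> = 0"
      proof (cases "r' = 0")
        case True thus ?thesis using z by simp
      next
        case False thus ?thesis using rows[of "n - 1 - j + r'"] r' j by auto
      qed
      finally show "(\<Sum>l<Suc j. Dl n (Suc j) Y $$ (r',l) * \<beta> l) = 0" .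
    qed simp
    thus False unfolding \<beta>_def by simp
  qed
  show ?thesis
    by (rule exI[of _ \<beta>]) (use rows nz in \<open>auto simp: \<beta>_def\<close>)
qed


context Xsetup begin

lemma Y_sq:
  assumes g: "g \<in> carrier_mat n n" and h: "h \<in> carrier_mat n n" and hg: "h * g = 1\<^sub>m n"
  shows "g * Xke n k eps * h \<in> carrier_mat n n"
    "(g * Xke n k eps * h) * (g * Xke n k eps * h) = 0\<^sub>m n n"
proof -
  let ?X = "Xke n k eps"
  note X = Xc
  have gX: "g * ?X \<in> carrier_mat n n" using g X by simp
  show Y: "g * ?X * h \<in> carrier_mat n n" using gX h by simp
  have e1: "g * ?X * h * (g * ?X * h) = (g * ?X) * (h * (g * ?X * h))"
    using assoc_mult_mat[OF gX h Y] .
  have e2: "h * (g * ?X * h) = (h * (g * ?X)) * h" using assoc_mult_mat[OF h gX h] by simp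
  have e3: "h * (g * ?X) = (h * g) * ?X" using assoc_mult_mat[OF h g X] by simp
  have e4: "(g * ?X) * (?X * h) = g * (?X * (?X * h))" using assoc_mult_mat[OF g X, of "?X * h" n] X h by simp
  have e5: "?X * (?X * h) = (?X * ?X) * h" using assoc_mult_mat[OF X X h] by simp
  show "(g * ?X * h) * (g * ?X * h) = 0\<^sub>m n n"
    unfolding e1 e2 e3 hg using X h g by (simp add: e4 e5 XX0)
qed

lemma W_nz:
  assumes g: "g \<in> carrier_mat n n" and h: "h \<in> carrier_mat n n"
    and D: "det (Dl n k (g * Xke n k eps * h)) \<noteq> 0"
  shows "det (mat k k (\<lambda>(i,l). h $$ (i,l))) \<noteq> 0"
proof -
  let ?W = "mat k k (\<lambda>(i,l). h $$ (i,l))"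
  let ?G = "mat k k (\<lambda>(r,i). g $$ (n - k + r, n - 1 - i) * cc k eps i)"
  have W: "?W \<in> carrier_mat k k" and G: "?G \<in> carrier_mat k k" by auto
  have "Dl n k (g * Xke n k eps * h) = ?G * ?W"
  proof (rule eq_matI)
    fix r l assume "r < dim_row (?G * ?W)" "l < dim_col (?G * ?W)"
    hence rl: "r < k" "l < k" by auto
    have "(?G * ?W) $$ (r,l) = (\<Sum>i<k. ?G $$ (r,i) * ?W $$ (i,l))" by (rule mult_entry[OF G W rl])
    also have "\<dots> = (\<Sum>i<k. g $$ (n - k + r, n - 1 - i) * cc k eps i * h $$ (i,l))"
      by (rule sum.cong[OF refl]) (use rl in auto)
    also have "\<dots> = (g * Xke n k eps * h) $$ (n - k + r, l)"
      by (rule conj_entry[symmetric, OF g h]) (use rl kn in auto)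
    finally show "Dl n k (g * Xke n k eps * h) $$ (r,l) = (?G * ?W) $$ (r,l)" using rl by (simp add: Dl_def)
  qed (auto simp: Dl_def)
  hence "det (Dl n k (g * Xke n k eps * h)) = det ?G * det ?W" using det_mult[OF G W] by simp
  thus ?thesis using D by auto
qed

lemma gamma_ex:
  fixes h :: "real mat"
  assumes h: "h \<in> carrier_mat n n" and W: "det (mat k k (\<lambda>(i,l). h $$ (i,l))) \<noteq> 0"
    and j: "k \<le> j" "j < n"
  shows "\<exists>\<gamma>. \<gamma> j = 1 \<and> (\<forall>r. r \<noteq> j \<longrightarrow> k \<le> r \<longrightarrow> \<gamma> r = 0) \<and> (\<forall>i<k. (\<Sum>l<n. h $$ (i,l) * \<gamma> l) = 0)"
proof -
  let ?W = "mat k k (\<lambda>(i,l). h $$ (i,l))"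
  obtain x where x: "\<And>r. r < k \<Longrightarrow> (\<Sum>l<k. ?W $$ (r,l) * x l) = - h $$ (r, j)"
    using solve_sys[of ?W k, OF _ W, of "\<lambda>r. - h $$ (r, j)"] by auto
  define \<gamma> where "\<gamma> l = (if l < k then x l else if l = j then 1 else 0)" for l
  have "(\<Sum>l<n. h $$ (i,l) * \<gamma> l) = 0" if i: "i < k" for i
  proof -
    have "(\<Sum>l<n. h $$ (i,l) * \<gamma> l) = (\<Sum>l<k. h $$ (i,l) * x l) + h $$ (i,j)"
      unfolding \<gamma>_def by (rule sum_split_pt2[OF j(2) j(1)])
    also have "(\<Sum>l<k. h $$ (i,l) * x l) = (\<Sum>l<k. ?W $$ (i,l) * x l)"
      by (rule sum.cong[OF refl]) (use i in auto)
    finally show ?thesis using x[OF i] by simp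
  qed
  thus ?thesis by (intro exI[of _ \<gamma>]) (use j in \<open>auto simp: \<gamma>_def\<close>)
qed

lemma Y_kill:
  assumes g: "g \<in> carrier_mat n n" and h: "h \<in> carrier_mat n n"
    and v: "\<And>i. i < k \<Longrightarrow> (\<Sum>l<n. h $$ (i,l) * v l) = 0" and a: "a < n"
  shows "(\<Sum>l<n. (g * Xke n k eps * h) $$ (a,l) * v l) = 0"
proof -
  have "(\<Sum>l<n. (g * Xke n k eps * h) $$ (a,l) * v l)
      = (\<Sum>l<n. (\<Sum>i<k. g $$ (a, n - 1 - i) * cc k eps i * h $$ (i,l)) * v l)"
    by (rule sum.cong[OF refl]) (use conj_entry[OF g h a] in auto)
  also have "\<dots> = (\<Sum>i<k. g $$ (a, n - 1 - i) * cc k eps i * (\<Sum>l<n. h $$ (i,l) * v l))"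
    by (simp add: sum_distrib_right sum_distrib_left mult.assoc) (rule sum.swap)
  also have "\<dots> = 0" using v by simp
  finally show ?thesis .
qed


lemma b_exists:
  fixes g h :: "real mat"
  assumes g: "g \<in> carrier_mat n n" and h: "h \<in> carrier_mat n n" and hg: "h * g = 1\<^sub>m n"
    and Y: "Y = g * Xke n k eps * h"
    and D: "\<forall>j\<in>{1..k}. det (Dl n j Y) \<noteq> 0"
  shows "\<exists>b. b \<in> carrier_mat n n \<and> upper_triangular b \<and> det b \<noteq> 0 \<and> Y * b = b * Xke n k eps"
proof -
  let ?X = "Xke n k eps"
  let ?c = "cc k eps"
  have Yc: "Y \<in> carrier_mat n n" and YY: "Y * Y = 0\<^sub>m n n" using Y_sq[OF g h hg] Y by auto
  have D': "det (Dl n j Y) \<noteq> 0" if "j \<le> k" for j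
  proof (cases "j = 0")
    case True thus ?thesis by (simp add: Dl_def)
  qed (use D that in auto)
  have "\<forall>j. \<exists>\<beta>. j < k \<longrightarrow> (\<beta> j = 1 \<and> (\<forall>r. j < r \<longrightarrow> \<beta> r = 0)
    \<and> (\<forall>r. n - 1 - j < r \<longrightarrow> r < n \<longrightarrow> (\<Sum>l<n. Y $$ (r,l) * \<beta> l) = 0)
    \<and> (\<Sum>l<n. Y $$ (n - 1 - j, l) * \<beta> l) \<noteq> 0)"
  proof
    fix j show "\<exists>\<beta>. j < k \<longrightarrow> (\<beta> j = 1 \<and> (\<forall>r. j < r \<longrightarrow> \<beta> r = 0)
    \<and> (\<forall>r. n - 1 - j < r \<longrightarrow> r < n \<longrightarrow> (\<Sum>l<n. Y $$ (r,l) * \<beta> l) = 0)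
    \<and> (\<Sum>l<n. Y $$ (n - 1 - j, l) * \<beta> l) \<noteq> 0)"
    proof (cases "j < k")
      case True
      thus ?thesis using beta_ex[OF Yc, of j] D'[of j] D'[of "Suc j"] kn by auto
    qed auto
  qed
  from choice[OF this] obtain \<beta> where \<beta>: "\<And>j. j < k \<Longrightarrow> \<beta> j j = 1 \<and> (\<forall>r. j < r \<longrightarrow> \<beta> j r = 0)
    \<and> (\<forall>r. n - 1 - j < r \<longrightarrow> r < n \<longrightarrow> (\<Sum>l<n. Y $$ (r,l) * \<beta> j l) = 0)
    \<and> (\<Sum>l<n. Y $$ (n - 1 - j, l) * \<beta> j l) \<noteq> 0" by blast
  have W: "det (mat k k (\<lambda>(i,l). h $$ (i,l))) \<noteq> 0"
    using W_nz[OF g h] D Y k2 by auto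
  have "\<forall>j. \<exists>\<gamma>. k \<le> j \<and> j < n \<longrightarrow> (\<gamma> j = 1 \<and> (\<forall>r. r \<noteq> j \<longrightarrow> k \<le> r \<longrightarrow> \<gamma> r = 0) \<and> (\<forall>i<k. (\<Sum>l<n. h $$ (i,l) * \<gamma> l) = 0))"
    using gamma_ex[OF h W] by blast
  from choice[OF this] obtain \<gamma> where \<gamma>: "\<And>j. k \<le> j \<Longrightarrow> j < n \<Longrightarrow> \<gamma> j j = 1 \<and> (\<forall>r. r \<noteq> j \<longrightarrow> k \<le> r \<longrightarrow> \<gamma> j r = 0) \<and> (\<forall>i<k. (\<Sum>l<n. h $$ (i,l) * \<gamma> j l) = 0)"
    by blast
  define B0 where "B0 = mat n n (\<lambda>(r,j). if j < k then \<beta> j r else if j < n - k then \<gamma> j r else 0)"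
  have B0: "B0 \<in> carrier_mat n n" unfolding B0_def by simp
  have YB0: "(Y * B0) $$ (r,i) = (\<Sum>l<n. Y $$ (r,l) * \<beta> i l)" if "r < n" "i < k" for r i
  proof -
    have "(Y * B0) $$ (r,i) = (\<Sum>l<n. Y $$ (r,l) * B0 $$ (l,i))" by (rule mult_entry[OF Yc B0]) (use that kn in auto)
    also have "\<dots> = (\<Sum>l<n. Y $$ (r,l) * \<beta> i l)" by (rule sum.cong[OF refl]) (use that kn in \<open>auto simp: B0_def\<close>)
    finally show ?thesis .
  qed
  define b where "b = mat n n (\<lambda>(r,j). if j < n - k then B0 $$ (r,j) else (Y * B0) $$ (r, n - 1 - j) / ?c (n - 1 - j))"
  have bc: "b \<in> carrier_mat n n" unfolding b_def by simp
  have b_lo: "b $$ (r,j) = (if j < k then \<beta> j r else \<gamma> j r)" if "r < n" "j < n - k" for r j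
    using that unfolding b_def B0_def by auto
  have b_hi: "b $$ (r,j) = (\<Sum>l<n. Y $$ (r,l) * \<beta> (n - 1 - j) l) / ?c (n - 1 - j)" if "r < n" "n - k \<le> j" "j < n" for r j
    using that YB0[of r "n - 1 - j"] unfolding b_def by auto
  have eq: "Y * b = b * ?X"
  proof (rule eq_matI)
    fix a j assume "a < dim_row (b * ?X)" "j < dim_col (b * ?X)"
    hence aj: "a < n" "j < n" using bc Xc by auto
    have L: "(Y * b) $$ (a,j) = (\<Sum>l<n. Y $$ (a,l) * b $$ (l,j))" by (rule mult_entry[OF Yc bc aj])
    have R: "(b * ?X) $$ (a,j) = (if j < k then b $$ (a, n - 1 - j) * ?c j else 0)" by (rule gX_entry[OF bc aj])
    show "(Y * b) $$ (a,j) = (b * ?X) $$ (a,j)"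
    proof (cases "j < k")
      case True
      have "(Y * b) $$ (a,j) = (\<Sum>l<n. Y $$ (a,l) * \<beta> j l)"
        unfolding L by (rule sum.cong[OF refl]) (use b_lo True kn in auto)
      moreover have "b $$ (a, n - 1 - j) = (\<Sum>l<n. Y $$ (a,l) * \<beta> j l) / ?c j"
        using b_hi[of a "n - 1 - j"] aj True kn by auto
      ultimately show ?thesis using R True cnz[of j] by simp
    next
      case False
      note F = False
      show ?thesis
      proof (cases "j < n - k")
        case True
        have "(Y * b) $$ (a,j) = (\<Sum>l<n. Y $$ (a,l) * \<gamma> j l)"
          unfolding L by (rule sum.cong[OF refl]) (use b_lo True F in auto)
        also have "\<dots> = 0" unfolding Y by (rule Y_kill[OF g h _ aj(1)]) (use \<gamma>[of j] F aj in auto)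
        finally show ?thesis using R F by simp
      next
        case False
        let ?i = "n - 1 - j"
        have i: "?i < k" using False aj by auto
        have "(Y * b) $$ (a,j) = (\<Sum>l<n. Y $$ (a,l) * ((Y * B0) $$ (l, ?i) / ?c ?i))"
          unfolding L by (rule sum.cong[OF refl]) (use False aj in \<open>auto simp: b_def\<close>)
        also have "\<dots> = (\<Sum>l<n. Y $$ (a,l) * (Y * B0) $$ (l, ?i)) / ?c ?i"
          by (simp add: sum_divide_distrib)
        also have "(\<Sum>l<n. Y $$ (a,l) * (Y * B0) $$ (l, ?i)) = (Y * (Y * B0)) $$ (a, ?i)"
          by (rule mult_entry[of Y n n "Y * B0" n a ?i, symmetric]) (use B0 Yc i kn aj in auto)
        also have "Y * (Y * B0) = (Y * Y) * B0" using assoc_mult_mat[OF Yc Yc B0] by simp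
        also have "\<dots> = 0\<^sub>m n n" using YY B0 by simp
        finally show ?thesis using R F i kn aj by simp
      qed
    qed
  qed (use bc Yc Xc in auto)
  have ut: "upper_triangular b"
  proof -
    { fix r j assume rj: "j < r" "r < n"
      have "b $$ (r,j) = 0"
      proof (cases "j < n - k")
        case True thus ?thesis using b_lo[OF rj(2) True] \<beta>[of j] \<gamma>[of j] rj by auto
      next
        case False thus ?thesis using b_hi[OF rj(2)] \<beta>[of "n - 1 - j"] rj by auto
      qed }
    thus ?thesis using bc by (auto simp: upper_triangular_def)
  qed
  have dg: "b $$ (j,j) \<noteq> 0" if j: "j < n" for j
  proof (cases "j < n - k")
    case True thus ?thesis using b_lo[OF j True] \<beta>[of j] \<gamma>[of j] j by auto
  next
    case False
    hence "n - 1 - (n - 1 - j) = j" "n - 1 - j < k" using j by auto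
    thus ?thesis using b_hi[OF j] \<beta>[of "n - 1 - j"] False j cnz by auto
  qed
  have "det b \<noteq> 0" using det_upper[OF ut bc] dg by simp
  thus ?thesis using bc ut eq by blast
qed


lemma fin:
  fixes b Y :: "real mat"
  assumes Yc: "Y \<in> carrier_mat n n" and bc: "b \<in> carrier_mat n n" and ut: "upper_triangular b"
    and d: "det b > 0" and eq: "Y * b = b * Xke n k eps"
  shows "Y \<in> orbit (Borel n) (Xke n k eps)"
proof -
  let ?X = "Xke n k eps"
  have n0: "0 < n" using k2 kn by auto
  define lam where "lam = 1 / root n (det b)"
  define b2 where "b2 = lam \<cdot>\<^sub>m b"
  have rp: "root n (det b) > 0" using real_root_gt_zero[OF n0 d] .
  have b2c: "b2 \<in> carrier_mat n n" using bc by (simp add: b2_def)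
  have "det b2 = lam ^ n * det b" using bc by (simp add: b2_def)
  also have "lam ^ n = 1 / det b" unfolding lam_def using real_root_pow_pos[OF n0 d] by (simp add: power_divide)
  finally have db2: "det b2 = 1" using d by simp
  have ut2: "upper_triangular b2" using ut bc by (auto simp: b2_def upper_triangular_def)
  have B: "b2 \<in> Borel n" using b2c db2 ut2 by (simp add: Borel_def SL_def)
  have eq2: "Y * b2 = b2 * ?X"
    unfolding b2_def using mult_smult_distrib[OF Yc bc, of lam] mult_smult_assoc_mat[OF bc Xc, of lam] eq by simp
  note p = mat_inv_props[OF b2c, unfolded db2, simplified]
  have "Ad b2 ?X = b2 * ?X * mat_inv b2" by (simp add: Ad_def)
  also have "\<dots> = Y * b2 * mat_inv b2" using eq2 by simp
  also have "\<dots> = Y * (b2 * mat_inv b2)" using assoc_mult_mat[OF Yc b2c p(1)] .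
  also have "\<dots> = Y" using p Yc by simp
  finally show ?thesis using B by (auto simp: orbit_def)
qed

lemma Xg_entry:
  assumes s: "s \<in> carrier_mat n n" and a: "a < n" and j: "j < n"
  shows "(Xke n k eps * s) $$ (a,j) = (if n - k \<le> a then cc k eps (n - 1 - a) * s $$ (n - 1 - a, j) else 0)"
proof -
  have "(Xke n k eps * s) $$ (a,j) = (\<Sum>q<n. Xke n k eps $$ (a,q) * s $$ (q,j))"
    by (rule mult_entry[OF Xc s a j])
  also have "\<dots> = (\<Sum>q<n. if q = n - 1 - a then (if n - k \<le> a then cc k eps (n - 1 - a) * s $$ (n - 1 - a, j) else 0) else 0)"
    by (rule sum.cong[OF refl]) (use Xe a in auto)
  also have "\<dots> = (if n - k \<le> a then cc k eps (n - 1 - a) * s $$ (n - 1 - a, j) else 0)"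
    using a by (subst sum.delta) auto
  finally show ?thesis .
qed

lemma neg_col:
  fixes b Y :: "real mat"
  assumes Yc: "Y \<in> carrier_mat n n" and bc: "b \<in> carrier_mat n n" and ut: "upper_triangular b"
    and eq: "Y * b = b * Xke n k eps" and lt: "2 * k < n"
  shows "\<exists>b'. b' \<in> carrier_mat n n \<and> upper_triangular b' \<and> det b' = - det b \<and> Y * b' = b' * Xke n k eps"
proof -
  let ?X = "Xke n k eps"
  define b' where "b' = mat n n (\<lambda>(r,j). if j = k then - b $$ (r,j) else b $$ (r,j))"
  have b'c: "b' \<in> carrier_mat n n" by (simp add: b'_def)
  have ut': "upper_triangular b'" using ut bc by (auto simp: b'_def upper_triangular_def)
  have kn': "k < n" using lt by simp
  have "det b' = (\<Prod>i<n. b' $$ (i,i))" by (rule det_upper[OF ut' b'c])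
  also have "\<dots> = (\<Prod>i<n. (if i = k then -1 else 1) * b $$ (i,i))"
    by (rule prod.cong[OF refl]) (auto simp: b'_def)
  also have "\<dots> = (\<Prod>i<n. (if i = k then -1 else 1::real)) * (\<Prod>i<n. b $$ (i,i))"
    by (rule prod.distrib)
  also have "(\<Prod>i<n. (if i = k then -1 else 1::real)) = -1"
    using kn' by (subst prod.delta) auto
  also have "(\<Prod>i<n. b $$ (i,i)) = det b" by (rule det_upper[symmetric, OF ut bc])
  finally have db': "det b' = - det b" by simp
  have eq': "Y * b' = b' * ?X"
  proof (rule eq_matI)
    fix a j assume "a < dim_row (b' * ?X)" "j < dim_col (b' * ?X)"
    hence aj: "a < n" "j < n" using b'c Xc by auto
    have L: "(Y * b') $$ (a,j) = (if j = k then - (Y * b) $$ (a,j) else (Y * b) $$ (a,j))"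
    proof -
      have "(Y * b') $$ (a,j) = (\<Sum>l<n. Y $$ (a,l) * b' $$ (l,j))" by (rule mult_entry[OF Yc b'c aj])
      also have "\<dots> = (\<Sum>l<n. (if j = k then -1 else 1) * (Y $$ (a,l) * b $$ (l,j)))"
        by (rule sum.cong[OF refl]) (use aj in \<open>auto simp: b'_def\<close>)
      also have "\<dots> = (if j = k then -1 else 1) * (\<Sum>l<n. Y $$ (a,l) * b $$ (l,j))"
        by (simp add: sum_distrib_left)
      also have "(\<Sum>l<n. Y $$ (a,l) * b $$ (l,j)) = (Y * b) $$ (a,j)" by (rule mult_entry[symmetric, OF Yc bc aj])
      finally show ?thesis by simp
    qed
    have R: "(b' * ?X) $$ (a,j) = (b * ?X) $$ (a,j)"
      using gX_entry[OF b'c aj] gX_entry[OF bc aj] aj lt by (auto simp: b'_def)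
    have Z: "(b * ?X) $$ (a,k) = 0" using gX_entry[OF bc aj(1) kn'] by simp
    show "(Y * b') $$ (a,j) = (b' * ?X) $$ (a,j)" using L R Z eq by auto
  qed (use b'c Yc Xc in auto)
  show ?thesis using b'c ut' db' eq' by blast
qed

lemma comm_pos:
  fixes s :: "real mat"
  assumes s: "s \<in> carrier_mat n n" and comm: "s * Xke n k eps = Xke n k eps * s"
    and nk: "n = 2 * k" and d: "det s \<noteq> 0"
  shows "det s > 0"
proof -
  let ?X = "Xke n k eps"
  let ?c = "cc k eps"
  have rel: "s $$ (a, n - 1 - j) * ?c j = (if n - k \<le> a then ?c (n - 1 - a) * s $$ (n - 1 - a, j) else 0)"
    if "a < n" "j < k" for a j
  proof -
    have "(s * ?X) $$ (a,j) = (?X * s) $$ (a,j)" using comm by simp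
    thus ?thesis using gX_entry[OF s that(1)] Xg_entry[OF s that(1)] that nk by simp
  qed
  have top: "s $$ (a, q) = 0" if "a < k" "k \<le> q" "q < n" for a q
  proof -
    have "s $$ (a, n - 1 - (n - 1 - q)) * ?c (n - 1 - q) = 0" using rel[of a "n - 1 - q"] that nk by simp
    thus ?thesis using cnz that by simp
  qed
  have bot: "s $$ (k + r, k + j) = ?c (k - 1 - r) * s $$ (k - 1 - r, k - 1 - j) / ?c (k - 1 - j)"
    if "r < k" "j < k" for r j
  proof -
    have "s $$ (k + r, n - 1 - (k - 1 - j)) * ?c (k - 1 - j) = ?c (n - 1 - (k + r)) * s $$ (n - 1 - (k + r), k - 1 - j)"
      using rel[of "k + r" "k - 1 - j"] that nk by simp
    moreover have "n - 1 - (k - 1 - j) = k + j" "n - 1 - (k + r) = k - 1 - r" using that nk by auto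
    ultimately show ?thesis using cnz by (simp add: field_simps)
  qed
  define P where "P = mat k k (\<lambda>(i,j). s $$ (i,j))"
  define R where "R = mat k k (\<lambda>(i,j). s $$ (k + i, j))"
  define T where "T = mat k k (\<lambda>(i,j). s $$ (k + i, k + j))"
  have P: "P \<in> carrier_mat k k" and R: "R \<in> carrier_mat k k" and T: "T \<in> carrier_mat k k"
    by (auto simp: P_def R_def T_def)
  have sblock: "s = four_block_mat P (0\<^sub>m k k) R T"
  proof (rule eq_matI)
    fix i j assume "i < dim_row (four_block_mat P (0\<^sub>m k k) R T)" "j < dim_col (four_block_mat P (0\<^sub>m k k) R T)"
    hence ij: "i < n" "j < n" using P T nk by auto
    show "s $$ (i,j) = four_block_mat P (0\<^sub>m k k) R T $$ (i,j)"
      using ij P T nk top[of i j] by (auto simp: P_def R_def T_def)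
  qed (use s P T nk in auto)
  have ds: "det s = det P * det T"
    unfolding sblock by (rule det_four_block_mat_upper_right_zero[OF P refl R T])
  define A where "A = mat k k (\<lambda>(r,i). if i = k - 1 - r then ?c i else 0)"
  define A' where "A' = mat k k (\<lambda>(l,j). if l = k - 1 - j then 1 / ?c l else 0)"
  have A: "A \<in> carrier_mat k k" and A': "A' \<in> carrier_mat k k" by (auto simp: A_def A'_def)
  have AP: "(A * P) $$ (r,l) = ?c (k - 1 - r) * s $$ (k - 1 - r, l)" if "r < k" "l < k" for r l
  proof -
    have "(A * P) $$ (r,l) = (\<Sum>i<k. A $$ (r,i) * P $$ (i,l))" by (rule mult_entry[OF A P that])
    also have "\<dots> = (\<Sum>i<k. if i = k - 1 - r then ?c (k - 1 - r) * s $$ (k - 1 - r, l) else 0)"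
      by (rule sum.cong[OF refl]) (use that in \<open>auto simp: A_def P_def\<close>)
    also have "\<dots> = ?c (k - 1 - r) * s $$ (k - 1 - r, l)" using that by (subst sum.delta) auto
    finally show ?thesis .
  qed
  have T_eq: "T = A * P * A'"
  proof (rule eq_matI)
    fix r j assume "r < dim_row (A * P * A')" "j < dim_col (A * P * A')"
    hence rj: "r < k" "j < k" using A A' by auto
    have AP': "A * P \<in> carrier_mat k k" using A P by simp
    have "(A * P * A') $$ (r,j) = (\<Sum>l<k. (A * P) $$ (r,l) * A' $$ (l,j))" by (rule mult_entry[OF AP' A' rj])
    also have "\<dots> = (\<Sum>l<k. if l = k - 1 - j then ?c (k - 1 - r) * s $$ (k - 1 - r, k - 1 - j) / ?c (k - 1 - j) else 0)"
      by (rule sum.cong[OF refl]) (use rj AP in \<open>auto simp: A'_def\<close>)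
    also have "\<dots> = ?c (k - 1 - r) * s $$ (k - 1 - r, k - 1 - j) / ?c (k - 1 - j)" using rj by (subst sum.delta) auto
    finally show "T $$ (r,j) = (A * P * A') $$ (r,j)" using bot[OF rj] rj by (simp add: T_def)
  qed (use A A' T in auto)
  have A'A: "A' * A = 1\<^sub>m k"
  proof (rule eq_matI)
    fix l i assume "l < dim_row (1\<^sub>m k :: real mat)" "i < dim_col (1\<^sub>m k :: real mat)"
    hence li: "l < k" "i < k" by auto
    have "(A' * A) $$ (l,i) = (\<Sum>m<k. A' $$ (l,m) * A $$ (m,i))" by (rule mult_entry[OF A' A li])
    also have "\<dots> = (\<Sum>m<k. if m = k - 1 - l then (if i = l then 1 else 0) else 0)"
      by (rule sum.cong[OF refl]) (use li cnz in \<open>auto simp: A_def A'_def\<close>)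
    also have "\<dots> = (if i = l then 1 else 0)" using li by (subst sum.delta) auto
    finally show "(A' * A) $$ (l,i) = 1\<^sub>m k $$ (l,i)" using li by auto
  qed (use A A' in auto)
  have "det A' * det A = 1" using det_mult[OF A' A] A'A by simp
  moreover have "det T = det A * det P * det A'"
    unfolding T_eq using det_mult[OF _ A', of "A * P"] det_mult[OF A P] A P by simp
  ultimately have "det T = det P" by (simp add: algebra_simps)
  hence "det s = det P ^ 2" using ds by (simp add: power2_eq_square)
  thus ?thesis using d by simp
qed


lemma charac:
  assumes g: "g \<in> SL n" and D: "\<forall>j\<in>{1..k}. det (Dl n j (Ad g (Xke n k eps))) \<noteq> 0"
  shows "Ad g (Xke n k eps) \<in> orbit (Borel n) (Xke n k eps)"
proof -
  let ?X = "Xke n k eps"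
  have gc: "g \<in> carrier_mat n n" and dg: "det g = 1" using g by (auto simp: SL_def)
  let ?h = "mat_inv g"
  note p = mat_inv_props[OF gc, unfolded dg, simplified]
  define Y where "Y = g * ?X * ?h"
  have Yad: "Ad g ?X = Y" by (simp add: Ad_def Y_def)
  have Yc: "Y \<in> carrier_mat n n" using Y_sq(1)[OF gc p(1) p(3)] Y_def by simp
  obtain b where b: "b \<in> carrier_mat n n" "upper_triangular b" "det b \<noteq> 0" "Y * b = b * ?X"
    using b_exists[OF gc p(1) p(3) Y_def] D Yad by auto
  show ?thesis unfolding Yad
  proof (cases "det b > 0")
    case True thus "Y \<in> orbit (Borel n) ?X" using fin[OF Yc b(1,2) _ b(4)] by simp
  next
    case False
    hence neg: "det b < 0" using b(3) by simp
    show "Y \<in> orbit (Borel n) ?X"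
    proof (cases "2 * k < n")
      case True
      obtain b' where b': "b' \<in> carrier_mat n n" "upper_triangular b'" "det b' = - det b" "Y * b' = b' * ?X"
        using neg_col[OF Yc b(1,2,4) True] by blast
      show ?thesis using fin[OF Yc b'(1,2) _ b'(4)] b'(3) neg by simp
    next
      case False
      hence nk: "n = 2 * k" using kn by simp
      define s where "s = ?h * b"
      have sc: "s \<in> carrier_mat n n" using p(1) b(1) by (simp add: s_def)
      have gX: "g * ?X \<in> carrier_mat n n" using gc Xc by simp
      have "s * ?X = ?h * (b * ?X)" unfolding s_def using assoc_mult_mat[OF p(1) b(1) Xc] .
      also have "\<dots> = ?h * (Y * b)" using b(4) by simp
      also have "Y * b = (g * ?X) * (?h * b)" unfolding Y_def using assoc_mult_mat[OF gX p(1) b(1)] .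
      also have "?h * ((g * ?X) * (?h * b)) = (?h * (g * ?X)) * (?h * b)"
        using assoc_mult_mat[OF p(1) gX, of "?h * b" n] p(1) b(1) by simp
      also have "?h * (g * ?X) = (?h * g) * ?X" using assoc_mult_mat[OF p(1) gc Xc] by simp
      also have "\<dots> = ?X" using p(3) Xc by simp
      finally have comm: "s * ?X = ?X * s" unfolding s_def .
      have "det s = det ?h * det b" unfolding s_def by (rule det_mult[OF p(1) b(1)])
      hence ds: "det s = det b" using p(4) by simp
      have "det s > 0" using comm_pos[OF sc comm nk] ds b(3) by simp
      thus ?thesis using ds neg by simp
    qed
  qed
qed

end



definition polyfun :: "(real \<Rightarrow> real) \<Rightarrow> bool" where
  "polyfun f \<longleftrightarrow> (\<exists>p. \<forall>t. f t = poly p t)"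

lemma polyfun_const[simp]: "polyfun (\<lambda>t. c)"
  unfolding polyfun_def by (rule exI[of _ "[:c:]"]) simp

lemma polyfun_id[simp]: "polyfun (\<lambda>t. t)"
  unfolding polyfun_def by (rule exI[of _ "[:0,1:]"]) simp

lemma polyfun_add: "polyfun f \<Longrightarrow> polyfun g \<Longrightarrow> polyfun (\<lambda>t. f t + g t)"
  unfolding polyfun_def by (metis poly_add)

lemma polyfun_mult: "polyfun f \<Longrightarrow> polyfun g \<Longrightarrow> polyfun (\<lambda>t. f t * g t)"
  unfolding polyfun_def by (metis poly_mult)

lemma polyfun_sum:
  assumes "\<And>x. x \<in> S \<Longrightarrow> polyfun (f x)"
  shows "polyfun (\<lambda>t. \<Sum>x\<in>S. f x t)"
proof (cases "finite S")
  case True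
  thus ?thesis using assms
    by (induct S rule: finite_induct) (auto intro: polyfun_add)
qed simp

lemma polyfun_prod:
  assumes "\<And>x. x \<in> S \<Longrightarrow> polyfun (f x)"
  shows "polyfun (\<lambda>t. \<Prod>x\<in>S. f x t)"
proof (cases "finite S")
  case True
  thus ?thesis using assms
    by (induct S rule: finite_induct) (auto intro: polyfun_mult)
qed simp

lemma polyfun_cont: "polyfun f \<Longrightarrow> continuous_on UNIV f"
  unfolding polyfun_def by (metis continuous_on_id continuous_on_poly ext)

lemma polyfun_det:
  assumes A: "\<And>t. A t \<in> carrier_mat m m"
    and e: "\<And>i j. i < m \<Longrightarrow> j < m \<Longrightarrow> polyfun (\<lambda>t. A t $$ (i,j))"
  shows "polyfun (\<lambda>t. det (A t))"
proof -
  have "polyfun (\<lambda>t. \<Sum>p \<in> {p. p permutes {0..<m}}. signof p * (\<Prod>i = 0..<m. A t $$ (i, p i)))"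
  proof (rule polyfun_sum)
    fix p assume p: "p \<in> {p. p permutes {0..<m}}"
    have "p i < m" if "i < m" for i using p that permutes_in_image[of p "{0..<m}" i] by auto
    thus "polyfun (\<lambda>t. signof p * (\<Prod>i = 0..<m. A t $$ (i, p i)))"
      by (intro polyfun_mult polyfun_const polyfun_prod) (auto intro: e)
  qed
  thus ?thesis using det_def'[OF A] by simp
qed

lemma polyfun_adj:
  assumes A: "\<And>t. A t \<in> carrier_mat m m"
    and e: "\<And>i j. i < m \<Longrightarrow> j < m \<Longrightarrow> polyfun (\<lambda>t. A t $$ (i,j))"
    and ij: "i < m" "j < m"
  shows "polyfun (\<lambda>t. adj_mat (A t) $$ (i,j))"
proof -
  have "adj_mat (A t) $$ (i,j) = (-1)^(j+i) * det (mat_delete (A t) j i)" for t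
    using A[of t] ij by (simp add: adj_mat_def cofactor_def)
  moreover have "polyfun (\<lambda>t. (-1)^(j+i) * det (mat_delete (A t) j i))"
  proof (intro polyfun_mult polyfun_const polyfun_det)
    show "mat_delete (A t) j i \<in> carrier_mat (m - 1) (m - 1)" for t using mat_delete_carrier[OF A[of t]] .
    fix a b assume ab: "a < m - 1" "b < m - 1"
    have "mat_delete (A t) j i $$ (a,b) = A t $$ (if a < j then a else Suc a, if b < i then b else Suc b)" for t
      using ab A[of t] by (simp add: mat_delete_def)
    thus "polyfun (\<lambda>t. mat_delete (A t) j i $$ (a,b))" using e ab by auto
  qed
  ultimately show ?thesis by simp
qed

lemma polyfun_multmat:
  assumes A: "\<And>t. A t \<in> carrier_mat m l" and B: "\<And>t. B t \<in> carrier_mat l q"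
    and eA: "\<And>i j. i < m \<Longrightarrow> j < l \<Longrightarrow> polyfun (\<lambda>t. A t $$ (i,j))"
    and eB: "\<And>i j. i < l \<Longrightarrow> j < q \<Longrightarrow> polyfun (\<lambda>t. B t $$ (i,j))"
    and ij: "i < m" "j < q"
  shows "polyfun (\<lambda>t. (A t * B t) $$ (i,j))"
proof -
  have "(A t * B t) $$ (i,j) = (\<Sum>r<l. A t $$ (i,r) * B t $$ (r,j))" for t by (rule mult_entry[OF A B ij])
  moreover have "polyfun (\<lambda>t. \<Sum>r<l. A t $$ (i,r) * B t $$ (r,j))"
    by (intro polyfun_sum polyfun_mult) (use eA eB ij in auto)
  ultimately show ?thesis by simp
qed


definition phi :: "nat \<Rightarrow> nat \<Rightarrow> (nat \<times> nat \<Rightarrow> real) \<Rightarrow> real" where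
  "phi n j f = det (mat j j (\<lambda>(r,c). f (n - j + r, c)))"

lemma phi_cont: "continuous_on UNIV (phi n j)"
proof -
  have "phi n j = (\<lambda>f. \<Sum>p \<in> {p. p permutes {0..<j}}. signof p * (\<Prod>i = 0..<j. f (n - j + i, p i)))"
  proof
    fix f
    have "phi n j f = (\<Sum>p \<in> {p. p permutes {0..<j}}. signof p * (\<Prod>i = 0..<j. mat j j (\<lambda>(r,c). f (n - j + r, c)) $$ (i, p i)))"
      unfolding phi_def by (rule det_def') simp
    also have "\<dots> = (\<Sum>p \<in> {p. p permutes {0..<j}}. signof p * (\<Prod>i = 0..<j. f (n - j + i, p i)))"
    proof (rule sum.cong[OF refl])
      fix p assume p: "p \<in> {p. p permutes {0..<j}}"
      have "p i < j" if "i < j" for i using p that permutes_in_image[of p "{0..<j}" i] by auto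
      thus "signof p * (\<Prod>i = 0..<j. mat j j (\<lambda>(r,c). f (n - j + r, c)) $$ (i, p i)) = signof p * (\<Prod>i = 0..<j. f (n - j + i, p i))"
        by (auto intro!: prod.cong)
    qed
    finally show "phi n j f = (\<Sum>p \<in> {p. p permutes {0..<j}}. signof p * (\<Prod>i = 0..<j. f (n - j + i, p i)))" .
  qed
  moreover have "continuous_on UNIV (\<lambda>f::nat \<times> nat \<Rightarrow> real. \<Sum>p \<in> {p. p permutes {0..<j}}. signof p * (\<Prod>i = 0..<j. f (n - j + i, p i)))"
    by (intro continuous_intros continuous_on_product_coordinates)
  ultimately show ?thesis by simp
qed

lemma open_U: "open {f. \<forall>j\<in>{1..k}. phi n j f \<noteq> 0}"
proof -
  have "{f. \<forall>j\<in>{1..k}. phi n j f \<noteq> 0} = (\<Inter>j\<in>{1..k}. {f. phi n j f \<noteq> 0})" by auto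
  moreover have "open (\<Inter>j\<in>{1..k}. {f. phi n j f \<noteq> 0})"
    by (intro open_INT ballI open_Collect_neq phi_cont continuous_on_const) simp
  ultimately show ?thesis by simp
qed

lemma phi_coords: "Y \<in> carrier_mat n n \<Longrightarrow> j \<le> n \<Longrightarrow> phi n j (mat_coords Y) = det (Dl n j Y)"
  unfolding phi_def Dl_def by (rule arg_cong[where f = det], rule eq_matI) (auto simp: mat_coords_def)

context Xsetup begin

lemma DlX: assumes j: "j \<in> {1..k}" shows "det (Dl n j (Xke n k eps)) \<noteq> 0"
proof
  let ?M = "Dl n j (Xke n k eps)"
  assume "det ?M = 0"
  then obtain v where v: "v \<in> carrier_vec j" "v \<noteq> 0\<^sub>v j" "?M *\<^sub>v v = 0\<^sub>v j"
    using det_0_iff_vec_prod_zero_field[OF Dl_carrier] by blast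
  have "v $ l = 0" if l: "l < j" for l
  proof -
    let ?r = "j - 1 - l"
    have r: "?r < j" using l by auto
    have "0 = (?M *\<^sub>v v) $ ?r" using v(3) r by simp
    also have "\<dots> = (\<Sum>c\<in>{0..<j}. ?M $$ (?r, c) * v $ c)"
      using r v(1) by (simp add: scalar_prod_def Dl_def)
    also have "\<dots> = (\<Sum>c\<in>{0..<j}. if c = l then cc k eps l * v $ l else 0)"
    proof (rule sum.cong[OF refl])
      fix c assume c: "c \<in> {0..<j}"
      have "?M $$ (?r, c) = Xke n k eps $$ (n - j + ?r, c)" using r c by (simp add: Dl_def)
      also have "\<dots> = (if c < k \<and> n - j + ?r = n - 1 - c then cc k eps c else 0)"
        by (rule Xe) (use c j l kn in auto)
      finally show "?M $$ (?r, c) * v $ c = (if c = l then cc k eps l * v $ l else 0)"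
        using c j l kn by auto
    qed
    also have "\<dots> = cc k eps l * v $ l" using l by simp
    finally show ?thesis using cnz by simp
  qed
  hence "v = 0\<^sub>v j" using v(1) by (intro eq_vecI) auto
  thus False using v(2) by simp
qed


lemma smult_smult_m: "a \<cdot>\<^sub>m (b \<cdot>\<^sub>m (M :: real mat)) = (a * b) \<cdot>\<^sub>m M"
  by (rule eq_matI) auto

lemma one_smult_m: "1 \<cdot>\<^sub>m (M :: real mat) = M"
  by (rule eq_matI) auto

lemma scale_lemma:
  assumes G: "G \<in> carrier_mat n n" and d: "det G > 0"
  shows "\<exists>g'\<in>SL n. Ad g' (Xke n k eps) = (1 / det G) \<cdot>\<^sub>m (G * Xke n k eps * adj_mat G)"
proof -
  let ?X = "Xke n k eps"
  have n0: "0 < n" using k2 kn by auto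
  define r where "r = root n (det G)"
  have r: "r > 0" "r ^ n = det G" using real_root_gt_zero[OF n0 d] real_root_pow_pos[OF n0 d] by (auto simp: r_def)
  define g' where "g' = (1 / r) \<cdot>\<^sub>m G"
  define mu where "mu = r / det G"
  have g'c: "g' \<in> carrier_mat n n" using G by (simp add: g'_def)
  have "det g' = (1 / r) ^ n * det G" using G by (simp add: g'_def)
  hence dg': "det g' = 1" using r d by (simp add: power_divide)
  have A: "adj_mat G \<in> carrier_mat n n" "G * adj_mat G = det G \<cdot>\<^sub>m 1\<^sub>m n" "adj_mat G * G = det G \<cdot>\<^sub>m 1\<^sub>m n"
    using adj_mat[OF G] by auto
  have lm: "(1 / r) * mu * det G = 1" using r d by (simp add: mu_def)
  have inv: "mat_inv g' = mu \<cdot>\<^sub>m adj_mat G"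
  proof (rule mat_inv_eq[OF g'c])
    show "mu \<cdot>\<^sub>m adj_mat G \<in> carrier_mat n n" using A by simp
    have "g' * (mu \<cdot>\<^sub>m adj_mat G) = ((1 / r) * mu * det G) \<cdot>\<^sub>m 1\<^sub>m n"
      unfolding g'_def using G A mult_smult_distrib[OF _ A(1), of "(1 / r) \<cdot>\<^sub>m G" n mu]
        mult_smult_assoc_mat[OF G A(1), of "1 / r"] by (simp add: smult_smult_m mult.commute mult.left_commute)
    thus "g' * (mu \<cdot>\<^sub>m adj_mat G) = 1\<^sub>m n" unfolding lm one_smult_m .
    have "(mu \<cdot>\<^sub>m adj_mat G) * g' = ((1 / r) * mu * det G) \<cdot>\<^sub>m 1\<^sub>m n"
      unfolding g'_def using G A mult_smult_distrib[OF _ G, of "mu \<cdot>\<^sub>m adj_mat G" n "1 / r"]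
        mult_smult_assoc_mat[OF A(1) G, of mu] by (simp add: smult_smult_m mult.commute mult.left_commute)
    thus "(mu \<cdot>\<^sub>m adj_mat G) * g' = 1\<^sub>m n" unfolding lm one_smult_m .
  qed
  have GX: "G * ?X \<in> carrier_mat n n" using G Xc by simp
  have "Ad g' ?X = g' * ?X * (mu \<cdot>\<^sub>m adj_mat G)" unfolding Ad_def inv ..
  also have "\<dots> = ((1 / r) * mu) \<cdot>\<^sub>m (G * ?X * adj_mat G)"
    unfolding g'_def using mult_smult_assoc_mat[OF G Xc, of "1 / r"]
      mult_smult_assoc_mat[OF GX A(1), of "1 / r"] mult_smult_distrib[OF _ A(1), of "(1 / r) \<cdot>\<^sub>m (G * ?X)" n mu]
      GX A(1) by (simp add: smult_smult_m mult.commute)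
  also have "(1 / r) * mu = 1 / det G" using r d by (simp add: mu_def)
  finally show ?thesis using g'c dg' by (auto simp: SL_def)
qed


lemma Dl_smult: "M \<in> carrier_mat n n \<Longrightarrow> j \<le> n \<Longrightarrow> Dl n j (c \<cdot>\<^sub>m M) = c \<cdot>\<^sub>m Dl n j M"
  unfolding Dl_def by (rule eq_matI) auto

lemma dense_pt:
  assumes g: "g \<in> SL n"
  shows "mat_coords (Ad g (Xke n k eps)) \<in> closure (mat_coords ` orbit (Borel n) (Xke n k eps))"
proof -
  let ?X = "Xke n k eps"
  have gc: "g \<in> carrier_mat n n" and dg: "det g = 1" using g by (auto simp: SL_def)
  have kn': "k \<le> n" using kn by simp
  define G where "G t = mat n n (\<lambda>(a,b). g $$ (a,b) + t * ((if a = b then 1 else 0) - g $$ (a,b)))" for t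
  have Gc: "G t \<in> carrier_mat n n" for t by (simp add: G_def)
  have Ge: "polyfun (\<lambda>t. G t $$ (a,b))" if "a < n" "b < n" for a b
  proof -
    have "polyfun (\<lambda>t. g $$ (a,b) + t * ((if a = b then 1 else 0) - g $$ (a,b)))"
      by (intro polyfun_add polyfun_mult polyfun_const polyfun_id)
    thus ?thesis using that by (simp add: G_def)
  qed
  define N where "N t = G t * ?X * adj_mat (G t)" for t
  have GXc: "G t * ?X \<in> carrier_mat n n" for t by (rule mult_carrier_mat[OF Gc Xc])
  have Nc: "N t \<in> carrier_mat n n" for t unfolding N_def by (rule mult_carrier_mat[OF GXc adj_mat(1)[OF Gc]])
  have GXe: "polyfun (\<lambda>t. (G t * ?X) $$ (a,b))" if "a < n" "b < n" for a b
    by (rule polyfun_multmat[OF Gc, of "\<lambda>t. ?X"]) (use Xc Ge that in auto)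
  have Ne: "polyfun (\<lambda>t. N t $$ (a,b))" if "a < n" "b < n" for a b
    unfolding N_def
    by (rule polyfun_multmat[OF GXc, of "\<lambda>t. adj_mat (G t)"])
       (use adj_mat(1)[OF Gc] GXe polyfun_adj[OF Gc Ge] that in auto)
  define d where "d t = det (G t)" for t
  have dp: "polyfun d" unfolding d_def by (rule polyfun_det[OF Gc Ge])
  have G0: "G 0 = g" by (rule eq_matI) (use gc in \<open>auto simp: G_def\<close>)
  have d0: "d 0 = 1" using dg G0 by (simp add: d_def)
  define F where "F t = (\<Prod>j\<in>{1..k}. det (Dl n j (N t)))" for t
  have Fp: "polyfun F"
    unfolding F_def
  proof (rule polyfun_prod, rule polyfun_det)
    fix j assume j: "j \<in> {1..k}"
    show "Dl n j (N t) \<in> carrier_mat j j" for t by simp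
    fix r c assume rc: "r < j" "c < j"
    have "Dl n j (N t) $$ (r,c) = N t $$ (n - j + r, c)" for t using rc by (simp add: Dl_def)
    thus "polyfun (\<lambda>t. Dl n j (N t) $$ (r,c))" using Ne[of "n - j + r" c] rc j kn by auto
  qed
  have G1: "G 1 = 1\<^sub>m n" by (rule eq_matI) (auto simp: G_def)
  have adj1: "adj_mat (1\<^sub>m n) = (1\<^sub>m n :: real mat)"
    using adj_mat(2)[of "1\<^sub>m n :: real mat" n] adj_mat(1)[of "1\<^sub>m n :: real mat" n] by (simp add: one_smult_m)
  have N1: "N 1 = ?X" unfolding N_def G1 adj1 using Xc by simp
  have F1: "F 1 \<noteq> 0" unfolding F_def N1 using DlX by (simp add: prod_zero_iff)
  obtain p where p: "\<And>t. F t = poly p t" using Fp unfolding polyfun_def by blast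
  have "p \<noteq> 0" using F1 p[of 1] by auto
  hence R: "finite {t. F t = 0}" using poly_roots_finite[of p] p by simp
  have adjg: "adj_mat g = mat_inv g" using mat_inv_det[OF gc] dg by (simp add: one_smult_m)
  have N0: "N 0 = Ad g ?X" unfolding N_def G0 adjg Ad_def ..
  define f where "f t = mat_coords ((1 / d t) \<cdot>\<^sub>m N t)" for t
  have f0: "f 0 = mat_coords (Ad g ?X)" unfolding f_def d0 N0 by (simp add: one_smult_m)
  define S where "S = {t. 0 < d t}"
  have dcont: "continuous_on UNIV d" by (rule polyfun_cont[OF dp])
  have Sopen: "open S" unfolding S_def by (rule open_Collect_less[OF continuous_on_const dcont])
  have S0: "0 \<in> S" using d0 by (simp add: S_def)
  have fcont: "continuous_on S f"
    unfolding f_def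
  proof (rule continuous_on_coordinatewise_then_product)
    fix i :: "nat \<times> nat"
    obtain a b where i: "i = (a,b)" by (cases i)
    have eqf: "(\<lambda>t. mat_coords ((1 / d t) \<cdot>\<^sub>m N t) i) = (\<lambda>t. if a < n \<and> b < n then N t $$ (a,b) / d t else 0)"
    proof
      fix t
      have dN: "dim_row (N t) = n" "dim_col (N t) = n" using Nc[of t] by auto
      show "mat_coords ((1 / d t) \<cdot>\<^sub>m N t) i = (if a < n \<and> b < n then N t $$ (a,b) / d t else 0)"
        by (auto simp: mat_coords_def i dN)
    qed
    show "continuous_on S (\<lambda>t. mat_coords ((1 / d t) \<cdot>\<^sub>m N t) i)"
    proof (cases "a < n \<and> b < n")
      case True
      have "continuous_on S (\<lambda>t. N t $$ (a,b) / d t)"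
        by (rule continuous_on_divide)
           (use continuous_on_subset[OF polyfun_cont[OF Ne[of a b]]] continuous_on_subset[OF dcont] True in \<open>auto simp: S_def\<close>)
      thus ?thesis unfolding eqf using True by simp
    next
      case False
      hence z: "(\<lambda>t. if a < n \<and> b < n then N t $$ (a,b) / d t else 0) = (\<lambda>t. 0)" by auto
      show ?thesis unfolding eqf z by (rule continuous_on_const)
    qed
  qed
  show ?thesis
    unfolding closure_iff_nhds_not_empty
  proof (intro allI impI)
    fix A U assume UA: "U \<subseteq> A" and U: "open U" and fU: "mat_coords (Ad g ?X) \<in> U"
    have f0U: "f 0 \<in> U" using fU f0 by simp
    have "\<exists>V. open V \<and> 0 \<in> V \<and> (\<forall>y\<in>S. y \<in> V \<longrightarrow> f y \<in> U)"
      using fcont[unfolded continuous_on_topological, rule_format, OF S0 U f0U] .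
    then obtain V where V: "open V" "0 \<in> V" "\<And>y. y \<in> S \<Longrightarrow> y \<in> V \<Longrightarrow> f y \<in> U"
      by blast
    have oVS: "open (V \<inter> S)" using V(1) Sopen by (rule open_Int)
    have "0 \<in> V \<inter> S" using V(2) S0 by simp
    then obtain \<delta> where \<delta>: "\<delta> > 0" "ball 0 \<delta> \<subseteq> V \<inter> S"
      using oVS[unfolded open_contains_ball] by blast
    have "infinite ({0<..<\<delta>} - {t. F t = 0})" using Diff_infinite_finite[OF R] \<delta>(1) by simp
    hence "({0<..<\<delta>} - {t. F t = 0}) \<noteq> {}" by (rule infinite_imp_nonempty)
    then obtain t where "t \<in> {0<..<\<delta>} - {t. F t = 0}" by blast
    hence t: "t \<in> {0<..<\<delta>}" "F t \<noteq> 0" by auto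
    have "t \<in> ball 0 \<delta>" using t by (simp add: dist_real_def)
    hence tVS: "t \<in> V" "t \<in> S" using \<delta>(2) by auto
    have ftU: "f t \<in> U" using V(3) tVS by simp
    have dt: "d t > 0" using tVS by (simp add: S_def)
    obtain g' where g': "g' \<in> SL n" "Ad g' ?X = (1 / d t) \<cdot>\<^sub>m N t"
      using scale_lemma[OF Gc dt[unfolded d_def]] unfolding N_def d_def by blast
    have "det (Dl n j (Ad g' ?X)) \<noteq> 0" if j: "j \<in> {1..k}" for j
    proof -
      have "det (Dl n j (N t)) \<noteq> 0" using t(2) j unfolding F_def by (simp add: prod_zero_iff)
      moreover have "Dl n j (Ad g' ?X) = (1 / d t) \<cdot>\<^sub>m Dl n j (N t)"
        unfolding g'(2) by (rule Dl_smult[OF Nc]) (use j kn in auto)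
      ultimately show ?thesis using dt by simp
    qed
    hence "Ad g' ?X \<in> orbit (Borel n) ?X" using charac[OF g'(1)] by blast
    hence "f t \<in> mat_coords ` orbit (Borel n) ?X" unfolding f_def g'(2)[symmetric] by blast
    thus "mat_coords ` orbit (Borel n) ?X \<inter> A \<noteq> {}" using ftU UA by blast
  qed
qed

end


theorem lemma3p1:
  fixes n k :: nat and eps :: real
  assumes "n \<ge> 4" and "2 \<le> k" and "2 * k \<le> n" and "eps \<in> {1, -1}"
  defines "X \<equiv> Xke n k eps"
  defines "Orb \<equiv> orbit (SL n) X"
  shows "X \<in> sl n
    \<and> orbit (Borel n) X \<subseteq> Orb
    \<and> mat_dense_in (orbit (Borel n) X) Orb
    \<and> (\<forall>Y \<in> Orb. orbit (Borel n) Y \<subseteq> Orb \<and> mat_dense_in (orbit (Borel n) Y) Orb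
          \<longrightarrow> orbit (Borel n) Y = orbit (Borel n) X)"
proof -
  interpret Xsetup n k eps using assms(2-4) by unfold_locales
  have SLc: "g \<in> carrier_mat n n \<and> det g \<noteq> 0" if "g \<in> SL n" for g using that by (auto simp: SL_def)
  have P1: "X \<in> sl n" unfolding X_def by (rule Xsl)
  have P2: "orbit (Borel n) X \<subseteq> Orb" unfolding Orb_def orbit_def using Borel_SL by blast
  have P3: "mat_dense_in (orbit (Borel n) X) Orb"
    unfolding mat_dense_in_def Orb_def orbit_def X_def
    using dense_pt unfolding orbit_def by blast
  have one: "1\<^sub>m n \<in> SL n" by (simp add: SL_def)
  have inv1: "mat_inv (1\<^sub>m n) = (1\<^sub>m n :: real mat)" by (rule mat_inv_eq) auto
  have XO: "X \<in> Orb"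
  proof -
    have "Ad (1\<^sub>m n) X = X" unfolding Ad_def inv1 using Xc X_def by simp
    thus ?thesis using one unfolding Orb_def orbit_def by force
  qed
  have XU: "mat_coords X \<in> {f. \<forall>j\<in>{1..k}. phi n j f \<noteq> 0}"
    using phi_coords[OF Xc] DlX kn unfolding X_def by auto
  have P4: "orbit (Borel n) Y = orbit (Borel n) X"
    if Y: "Y \<in> Orb" and sub: "orbit (Borel n) Y \<subseteq> Orb" and dn: "mat_dense_in (orbit (Borel n) Y) Orb" for Y
  proof -
    obtain g0 where g0: "g0 \<in> SL n" "Y = Ad g0 X" using Y unfolding Orb_def orbit_def by blast
    have Yc: "Y \<in> carrier_mat n n" using Ad_carrier SLc[OF g0(1)] Xc g0(2) X_def by blast
    have "mat_coords X \<in> closure (mat_coords ` orbit (Borel n) Y)"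
      using dn XO unfolding mat_dense_in_def by blast
    hence "mat_coords ` orbit (Borel n) Y \<inter> {f. \<forall>j\<in>{1..k}. phi n j f \<noteq> 0} \<noteq> {}"
      unfolding closure_iff_nhds_not_empty using open_U XU by blast
    then obtain Y' where Y': "Y' \<in> orbit (Borel n) Y" "\<forall>j\<in>{1..k}. phi n j (mat_coords Y') \<noteq> 0" by blast
    obtain b where b: "b \<in> Borel n" "Y' = Ad b Y" using Y'(1) unfolding orbit_def by blast
    have "Y' \<in> Orb" using sub Y'(1) by blast
    then obtain g where g: "g \<in> SL n" "Y' = Ad g X" unfolding Orb_def orbit_def by blast
    have Y'c: "Y' \<in> carrier_mat n n" using Ad_carrier SLc[OF g(1)] Xc g(2) X_def by blast
    have "\<forall>j\<in>{1..k}. det (Dl n j (Ad g X)) \<noteq> 0"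
      using Y'(2) phi_coords[OF Y'c] kn g(2) by auto
    hence "Y' \<in> orbit (Borel n) X" using charac[OF g(1)] g(2) X_def by simp
    then obtain b2 where b2: "b2 \<in> Borel n" "Y' = Ad b2 X" unfolding orbit_def by blast
    show ?thesis by (rule orbit_Borel_eq[OF Yc _ b(1) b2(1)]) (use Xc X_def b b2 in auto)
  qed
  show ?thesis using P1 P2 P3 P4 by blast
qed

end
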